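(* Let $A$ be a (not necessarily associative or Lie) algebra over a field $\mathbb{F}$ with product $(x,y)\mapsto xy$. Then the set $\mathrm{BiDer}_r(A)$ of right biderivations of $A$, with pointwise vector space operations and bracket $\{B_1,B_2\}(x,y)=B_1(B_2(x,y),y)-B_2(B_1(x,y),y)$, is a Lie algebra over $\mathbb{F}$.
   Context: A right biderivation of an algebra $A$ is a map $B\colon A\times A\to A$ (not required to be linear in the second argument) which is linear in its first argument and satisfies $B(xy,z)=x\,B(y,z)+B(x,z)\,y$ for all $x,y,z\in A$. *)

theory Defs
  imports Main HOL.Vector_Spaces "HOL-Library.Function_Algebras"
begin

definition nonassoc_algebra :: "('f::field \<Rightarrow> 'a::ab_group_add \<Rightarrow> 'a) \<Rightarrow> ('a \<Rightarrow> 'a \<Rightarrow> 'a) \<Rightarrow> bool" where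
  "nonassoc_algebra scale mult \<longleftrightarrow>
     vector_space scale \<and>
     (\<forall>x. Vector_Spaces.linear scale scale (\<lambda>y. mult x y)) \<and>
     (\<forall>y. Vector_Spaces.linear scale scale (\<lambda>x. mult x y))"

definition right_biderivation :: "('f::field \<Rightarrow> 'a::ab_group_add \<Rightarrow> 'a) \<Rightarrow> ('a \<Rightarrow> 'a \<Rightarrow> 'a) \<Rightarrow> ('a \<Rightarrow> 'a \<Rightarrow> 'a) \<Rightarrow> bool" where
  "right_biderivation scale mult B \<longleftrightarrow>
     (\<forall>z. Vector_Spaces.linear scale scale (\<lambda>x. B x z)) \<and>
     (\<forall>x y z. B (mult x y) z = mult x (B y z) + mult (B x z) y)"

definition lie_algebra :: "('f::field \<Rightarrow> 'v::ab_group_add \<Rightarrow> 'v) \<Rightarrow> 'v set \<Rightarrow> ('v \<Rightarrow> 'v \<Rightarrow> 'v) \<Rightarrow> bool" where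
  "lie_algebra smul L br \<longleftrightarrow>
     vector_space smul \<and> module.subspace smul L \<and>
     (\<forall>x\<in>L. \<forall>y\<in>L. br x y \<in> L) \<and>
     (\<forall>x\<in>L. \<forall>y\<in>L. \<forall>z\<in>L. br (x + y) z = br x z + br y z \<and> br z (x + y) = br z x + br z y) \<and>
     (\<forall>c. \<forall>x\<in>L. \<forall>y\<in>L. br (smul c x) y = smul c (br x y) \<and> br x (smul c y) = smul c (br x y)) \<and>
     (\<forall>x\<in>L. br x x = 0) \<and>
     (\<forall>x\<in>L. \<forall>y\<in>L. \<forall>z\<in>L. br x (br y z) + br y (br z x) + br z (br x y) = 0)"

end

theory Submission
  imports Defs
begin

lemma add_diff_hom:
  fixes f :: "'a::ab_group_add \<Rightarrow> 'b::ab_group_add"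
  assumes "\<And>a b. f (a + b) = f a + f b"
  shows "f (a - b) = f a - f b"
proof -
  have "f (a - b) + f b = f a" using assms[of "a - b" b] by simp
  thus ?thesis by (simp add: eq_diff_eq)
qed

theorem mainTheorem6:
  fixes scale :: "'f::field \<Rightarrow> 'a::ab_group_add \<Rightarrow> 'a"
    and mult :: "'a \<Rightarrow> 'a \<Rightarrow> 'a"
  assumes "nonassoc_algebra scale mult"
  shows "lie_algebra (\<lambda>c B. \<lambda>x y. scale c (B x y))
           {B. right_biderivation scale mult B}
           (\<lambda>B1 B2. \<lambda>x y. B1 (B2 x y) y - B2 (B1 x y) y)"
proof -
  have VS: "vector_space scale" and
    m1: "\<And>x a b. mult x (a + b) = mult x a + mult x b" and
    m1s: "\<And>x c a. mult x (scale c a) = scale c (mult x a)" and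
    m2: "\<And>x a b. mult (a + b) x = mult a x + mult b x" and
    m2s: "\<And>x c a. mult (scale c a) x = scale c (mult a x)"
    using assms unfolding nonassoc_algebra_def linear_iff by auto
  interpret vector_space scale by (rule VS)
  have m1d: "\<And>x a b. mult x (a - b) = mult x a - mult x b"
    by (rule add_diff_hom, rule m1)
  have m2d: "\<And>x a b. mult (a - b) x = mult a x - mult b x"
    by (rule add_diff_hom[where f="\<lambda>a. mult a x" for x], rule m2)
  have m10: "\<And>x. mult x 0 = 0" using m1d[of _ 0 0] by simp
  have m20: "mult 0 x = 0" for x using m2d[of 0 0 x] by simp
  let ?L = "{B. right_biderivation scale mult B}"
  have L_iff: "B \<in> ?L \<longleftrightarrow> (\<forall>a b z. B (a + b) z = B a z + B b z) \<and>
      (\<forall>c a z. B (scale c a) z = scale c (B a z)) \<and>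
      (\<forall>x y z. B (mult x y) z = mult x (B y z) + mult (B x z) y)" for B
    unfolding right_biderivation_def linear_iff using VS by auto
  have Ladd: "B (a + b) z = B a z + B b z" if "B \<in> ?L" for B a b z
    using that L_iff by blast
  have Lsc: "B (scale c a) z = scale c (B a z)" if "B \<in> ?L" for B c a z
    using that L_iff by blast
  have Lder: "B (mult x y) z = mult x (B y z) + mult (B x z) y" if "B \<in> ?L" for B x y z
    using that L_iff by blast
  have Ldiff: "B (a - b) z = B a z - B b z" if "B \<in> ?L" for B a b z
    by (rule add_diff_hom[where f="\<lambda>a. B a z"], rule Ladd[OF that])
  have VSF: "vector_space (\<lambda>c B. \<lambda>x y. scale c (B x y))"
    by unfold_locales (auto simp: fun_eq_iff scale_right_distrib scale_left_distrib)
  have sub: "module.subspace (\<lambda>c B. \<lambda>x y. scale c (B x y)) ?L"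
    unfolding module.subspace_def[OF VSF[unfolded module_iff_vector_space[symmetric]]]
  proof (intro conjI ballI allI)
    show "0 \<in> ?L" unfolding L_iff by (simp add: m10 m20)
  next
    fix B1 B2 assume a: "B1 \<in> ?L" "B2 \<in> ?L"
    show "B1 + B2 \<in> ?L" unfolding L_iff
      by (simp add: Ladd[OF a(1)] Ladd[OF a(2)] Lsc[OF a(1)] Lsc[OF a(2)]
          Lder[OF a(1)] Lder[OF a(2)] m1 m2 scale_right_distrib algebra_simps)
  next
    fix c B assume a: "B \<in> ?L"
    show "(\<lambda>x y. scale c (B x y)) \<in> ?L" unfolding L_iff
      by (simp add: Ladd[OF a] Lsc[OF a] Lder[OF a] m1s m2s scale_right_distrib
          scale_left_commute)
  qed
  have closed: "(\<lambda>x y. B1 (B2 x y) y - B2 (B1 x y) y) \<in> ?L" if a: "B1 \<in> ?L" "B2 \<in> ?L" for B1 B2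
    unfolding L_iff
    by (simp add: Ladd[OF a(1)] Ladd[OF a(2)] Lsc[OF a(1)] Lsc[OF a(2)]
          Lder[OF a(1)] Lder[OF a(2)] m1 m2 m1d m2d scale_right_diff_distrib algebra_simps)
  show ?thesis
    unfolding lie_algebra_def
  proof (intro conjI ballI allI)
    show "vector_space (\<lambda>c B. \<lambda>x y. scale c (B x y))" by (rule VSF)
    show "module.subspace (\<lambda>c B. \<lambda>x y. scale c (B x y)) ?L" by (rule sub)
  next
    fix x y assume "x \<in> ?L" "y \<in> ?L" thus "(\<lambda>a b. x (y a b) b - y (x a b) b) \<in> ?L"
      by (rule closed)
  next
    fix x y z assume a: "x \<in> ?L" "y \<in> ?L" "z \<in> ?L"
    show "(\<lambda>a b. (x + y) (z a b) b - z ((x + y) a b) b) =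
       (\<lambda>a b. x (z a b) b - z (x a b) b) + (\<lambda>a b. y (z a b) b - z (y a b) b)"
      by (simp add: fun_eq_iff Ladd[OF a(3)])
    show "(\<lambda>a b. z ((x + y) a b) b - (x + y) (z a b) b) =
       (\<lambda>a b. z (x a b) b - x (z a b) b) + (\<lambda>a b. z (y a b) b - y (z a b) b)"
      by (simp add: fun_eq_iff Ladd[OF a(3)])
  qed (simp_all add: fun_eq_iff Lsc Ldiff Ladd scale_right_diff_distrib algebra_simps)
qed

end
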